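(* Let $\alpha>0$, $t_0>0$, and define the set-valued map $G:[t_0,+\infty)\times\mathcal H\times\mathcal H\rightrightarrows\mathcal H\times\mathcal H$ by $$G(t,u,v)=\{v\}\times\Big(-\tfrac{\alpha}{t}v-\arg\min_{g\in C(u)}\langle g,-v\rangle\Big).$$ Then: (i) for all $(t,u,v)$, the set $G(t,u,v)$ is convex and compact; (ii) $G$ is upper semicontinuous; (iii) if $\dim\mathcal H<+\infty$, the map $\phi:[t_0,+\infty)\times\mathcal H\times\mathcal H\to\mathcal H\times\mathcal H$, $(t,u,v)\mapsto\operatorname{proj}_{G(t,u,v)}(0)$, is locally compact; (iv) if the gradients $\nabla f_i$ are globally $L$-Lipschitz continuous, then there exists $c>0$ such that for all $(t,u,v)\in[t_0,+\infty)\times\mathcal H\times\mathcal H$, $$\sup_{\xi\in G(t,u,v)}\|\xi\|_{\mathcal H\times\mathcal H}\le c\big(1+\|(u,v)\|_{\mathcal H\times\mathcal H}\big),$$ where $\|(x,y)\|_{\mathcal H\times\mathcal H}=\sqrt{\|x\|^2+\|y\|^2}$.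
   Context: $\mathcal H$ is a real Hilbert space. $f_1,\dots,f_m:\mathcal H\to\mathbb R$ are convex and continuously differentiable. $C(u)=\operatorname{co}\{\nabla f_i(u):i=1,\dots,m\}$. For a closed convex $K$, $\operatorname{proj}_K(y)=\arg\min_{w\in K}\|w-y\|^2$. A set-valued map $G:\mathcal X\rightrightarrows\mathcal Y$ is upper semicontinuous at $x_0$ if for every open $N\supset G(x_0)$ there is a neighborhood $M$ of $x_0$ with $G(M)\subset N$; it is upper semicontinuous if this holds at every point. A single-valued map $\phi:\mathcal X\to\mathcal Y$ is locally compact if every point has a neighborhood that is mapped into a compact subset of $\mathcal Y$. *)

theory Defs
  imports "HOL-Analysis.Analysis"
begin

text \<open>C(u) = co { grad f_i (u) : i = 1..m }, gradients given by the functions df i.\<close>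
definition Cset :: "nat \<Rightarrow> (nat \<Rightarrow> 'a::real_inner \<Rightarrow> 'a) \<Rightarrow> 'a \<Rightarrow> 'a set" where
  "Cset m df u = convex hull ((\<lambda>i. df i u) ` {1..m})"

definition argmin_inner :: "'a::real_inner set \<Rightarrow> 'a \<Rightarrow> 'a set" where
  "argmin_inner K y = {g \<in> K. \<forall>g'\<in>K. inner g y \<le> inner g' y}"

definition Gmap :: "nat \<Rightarrow> (nat \<Rightarrow> 'a::real_inner \<Rightarrow> 'a) \<Rightarrow> real \<Rightarrow> real \<times> 'a \<times> 'a \<Rightarrow> ('a \<times> 'a) set" where
  "Gmap m df \<alpha> x = (case x of (t, u, v) \<Rightarrow>
     {(v, - ((\<alpha> / t) *\<^sub>R v) - g) | g. g \<in> argmin_inner (Cset m df u) (- v)})"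

definition proj :: "'a::real_normed_vector set \<Rightarrow> 'a \<Rightarrow> 'a" where
  "proj K y = (SOME w. w \<in> K \<and> (\<forall>w'\<in>K. (norm (w - y))\<^sup>2 \<le> (norm (w' - y))\<^sup>2))"

definition usc_on :: "'a::topological_space set \<Rightarrow> ('a \<Rightarrow> 'b::topological_space set) \<Rightarrow> bool" where
  "usc_on S G \<longleftrightarrow> (\<forall>x0\<in>S. \<forall>N. open N \<and> G x0 \<subseteq> N \<longrightarrow>
      (\<exists>M. open M \<and> x0 \<in> M \<and> (\<forall>y\<in>M \<inter> S. G y \<subseteq> N)))"

definition locally_compact_map :: "'a::topological_space set \<Rightarrow> ('a \<Rightarrow> 'b::topological_space) \<Rightarrow> bool" where
  "locally_compact_map S \<phi> \<longleftrightarrow> (\<forall>x\<in>S. \<exists>M K. open M \<and> x \<in> M \<and> compact K \<and> \<phi> ` (M \<inter> S) \<subseteq> K)"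

end

theory Submission
  imports Defs
begin


lemma hull_idx:
  fixes a :: "nat \<Rightarrow> 'a::real_vector"
  assumes "finite I"
  shows "g \<in> convex hull (a ` I) \<longleftrightarrow> (\<exists>l. (\<forall>i\<in>I. 0 \<le> l i) \<and> sum l I = 1 \<and> g = (\<Sum>i\<in>I. l i *\<^sub>R a i))"
proof
  let ?R = "{g. \<exists>l. (\<forall>i\<in>I. 0 \<le> l i) \<and> sum l I = 1 \<and> g = (\<Sum>i\<in>I. l i *\<^sub>R a i)}"
  have "convex ?R"
    unfolding convex_def
  proof (intro ballI allI impI)
    fix x y and u v :: real
    assume "x \<in> ?R" "y \<in> ?R" "0 \<le> u" "0 \<le> v" "u + v = 1"
    then obtain l1 l2 where l1: "\<forall>i\<in>I. 0 \<le> l1 i" "sum l1 I = 1" "x = (\<Sum>i\<in>I. l1 i *\<^sub>R a i)"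
      and l2: "\<forall>i\<in>I. 0 \<le> l2 i" "sum l2 I = 1" "y = (\<Sum>i\<in>I. l2 i *\<^sub>R a i)" by blast
    show "u *\<^sub>R x + v *\<^sub>R y \<in> ?R"
    proof (intro CollectI exI[of _ "\<lambda>i. u * l1 i + v * l2 i"] conjI)
      show "\<forall>i\<in>I. 0 \<le> u * l1 i + v * l2 i" using l1 l2 \<open>0 \<le> u\<close> \<open>0 \<le> v\<close> by simp
      show "(\<Sum>i\<in>I. u * l1 i + v * l2 i) = 1" using l1 l2 \<open>u + v = 1\<close>
        by (simp add: sum.distrib sum_distrib_left[symmetric])
      show "u *\<^sub>R x + v *\<^sub>R y = (\<Sum>i\<in>I. (u * l1 i + v * l2 i) *\<^sub>R a i)"
        using l1 l2 by (simp add: scaleR_add_left sum.distrib scaleR_sum_right)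
    qed
  qed
  moreover have "a ` I \<subseteq> ?R"
  proof
    fix g assume "g \<in> a ` I"
    then obtain i where i: "i \<in> I" "g = a i" by blast
    show "g \<in> ?R"
    proof (intro CollectI exI[of _ "\<lambda>j. if j = i then 1 else 0"] conjI)
      have "(\<Sum>j\<in>I. (if j = i then 1 else 0) *\<^sub>R a j) = (\<Sum>j\<in>I. if j = i then a j else 0)"
        by (rule sum.cong) auto
      then show "g = (\<Sum>j\<in>I. (if j = i then 1 else 0) *\<^sub>R a j)" using i assms by simp
    qed (use i assms in auto)
  qed
  ultimately have "convex hull (a ` I) \<subseteq> ?R" by (rule hull_minimal[rotated])
  then show "g \<in> convex hull (a ` I) \<Longrightarrow> \<exists>l. (\<forall>i\<in>I. 0 \<le> l i) \<and> sum l I = 1 \<and> g = (\<Sum>i\<in>I. l i *\<^sub>R a i)"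
    by blast
next
  assume "\<exists>l. (\<forall>i\<in>I. 0 \<le> l i) \<and> sum l I = 1 \<and> g = (\<Sum>i\<in>I. l i *\<^sub>R a i)"
  then obtain l where l: "\<forall>i\<in>I. 0 \<le> l i" "sum l I = 1" "g = (\<Sum>i\<in>I. l i *\<^sub>R a i)" by blast
  show "g \<in> convex hull (a ` I)"
    unfolding l(3)
    by (rule convex_sum[OF assms convex_convex_hull]) (use l in \<open>auto intro: hull_inc\<close>)
qed

lemma hull_le:
  fixes a :: "nat \<Rightarrow> 'a::real_inner"
  assumes "g \<in> convex hull (a ` I)" "\<And>j. j \<in> I \<Longrightarrow> c \<le> inner (a j) w"
  shows "c \<le> inner g w"
proof -
  have "convex hull (a ` I) \<subseteq> {x. c \<le> inner x w}"
    by (rule hull_minimal) (use assms(2) in \<open>auto simp: convex_halfspace_ge inner_commute[of _ w]\<close>)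
  then show ?thesis using assms(1) by auto
qed

lemma Cset_props:
  assumes "m \<ge> 1"
  shows "compact (Cset m df u)" "convex (Cset m df u)" "Cset m df u \<noteq> {}"
  unfolding Cset_def using assms
  by (auto intro!: finite_imp_compact_convex_hull)

lemma argmin_props:
  fixes K :: "'a::real_inner set"
  assumes "compact K" "convex K" "K \<noteq> {}"
  shows "compact (argmin_inner K y)" "convex (argmin_inner K y)" "argmin_inner K y \<noteq> {}"
    "argmin_inner K y \<subseteq> K"
proof -
  have eq: "argmin_inner K y = K \<inter> (\<Inter>g'\<in>K. {g. inner y g \<le> inner g' y})"
    unfolding argmin_inner_def by (auto simp: inner_commute)
  show "compact (argmin_inner K y)" unfolding eq
    by (intro compact_Int_closed assms closed_INT ballI closed_halfspace_le)
  show "convex (argmin_inner K y)" unfolding eq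
    by (intro convex_Int assms convex_INT ballI convex_halfspace_le)
  have "continuous_on K (\<lambda>x. inner x y)" by (intro continuous_intros)
  then obtain x where "x \<in> K" "\<forall>z\<in>K. inner x y \<le> inner z y"
    using continuous_attains_inf[OF assms(1) assms(3), of "\<lambda>x. inner x y"] by blast
  then show "argmin_inner K y \<noteq> {}" unfolding argmin_inner_def by auto
  show "argmin_inner K y \<subseteq> K" unfolding argmin_inner_def by auto
qed

lemma G_eq: "Gmap m df \<alpha> (t, u, v) = (\<lambda>g. (v, - ((\<alpha> / t) *\<^sub>R v) - g)) ` argmin_inner (Cset m df u) (- v)"
  unfolding Gmap_def by auto

lemma G_props:
  assumes "m \<ge> 1"
  shows "compact (Gmap m df \<alpha> (t, u, v))" "convex (Gmap m df \<alpha> (t, u, v))" "Gmap m df \<alpha> (t, u, v) \<noteq> {}"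
proof -
  note A = argmin_props[OF Cset_props[OF assms], of df u "-v"]
  show "compact (Gmap m df \<alpha> (t, u, v))" unfolding G_eq
    by (intro compact_continuous_image A continuous_intros)
  show "Gmap m df \<alpha> (t, u, v) \<noteq> {}" unfolding G_eq using A by auto
  show "convex (Gmap m df \<alpha> (t, u, v))" unfolding G_eq
  proof (rule convexI)
    fix p q and a b :: real
    assume "p \<in> (\<lambda>g. (v, - ((\<alpha> / t) *\<^sub>R v) - g)) ` argmin_inner (Cset m df u) (- v)"
      "q \<in> (\<lambda>g. (v, - ((\<alpha> / t) *\<^sub>R v) - g)) ` argmin_inner (Cset m df u) (- v)"
      and ab: "0 \<le> a" "0 \<le> b" "a + b = 1"
    then obtain x y where xy: "x \<in> argmin_inner (Cset m df u) (- v)" "y \<in> argmin_inner (Cset m df u) (- v)"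
      "p = (v, - ((\<alpha> / t) *\<^sub>R v) - x)" "q = (v, - ((\<alpha> / t) *\<^sub>R v) - y)" by blast
    have "a *\<^sub>R x + b *\<^sub>R y \<in> argmin_inner (Cset m df u) (- v)"
      using A(2) xy ab unfolding convex_def by blast
    moreover have "a *\<^sub>R (v, - ((\<alpha> / t) *\<^sub>R v) - x) + b *\<^sub>R (v, - ((\<alpha> / t) *\<^sub>R v) - y)
       = (v, - ((\<alpha> / t) *\<^sub>R v) - (a *\<^sub>R x + b *\<^sub>R y))"
    proof -
      have "\<alpha>*a/t + \<alpha>*b/t = \<alpha>*(a+b)/t" by (simp add: algebra_simps add_divide_distrib)
      then show ?thesis using ab by (simp add: algebra_simps flip: scaleR_add_left)
    qed
    ultimately show "a *\<^sub>R p + b *\<^sub>R q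
       \<in> (\<lambda>g. (v, - ((\<alpha> / t) *\<^sub>R v) - g)) ` argmin_inner (Cset m df u) (- v)"
      using xy by auto
  qed
qed



lemma bound_iv:
  fixes df :: "nat \<Rightarrow> 'a::real_inner \<Rightarrow> 'a"
  assumes m: "m \<ge> 1" and t0: "t0 > 0" and al: "\<alpha> > 0"
    and lip: "\<forall>i\<in>{1..m}. \<forall>x y. norm (df i x - df i y) \<le> L * norm (x - y)"
  shows "\<exists>c>0. \<forall>t u v. t \<ge> t0 \<longrightarrow> (\<forall>\<xi>\<in>Gmap m df \<alpha> (t, u, v). norm \<xi> \<le> c * (1 + norm (u, v)))"
proof -
  define M0 where "M0 = (\<Sum>i\<in>{1..m}. norm (df i 0))"
  define c where "c = 1 + \<alpha> / t0 + M0 + \<bar>L\<bar>"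
  have M0: "M0 \<ge> 0" unfolding M0_def by (simp add: sum_nonneg)
  have apos: "\<alpha> / t0 > 0" using al t0 by simp
  have cpos: "c > 0" unfolding c_def using M0 apos by simp
  have "\<forall>t u v. t \<ge> t0 \<longrightarrow> (\<forall>\<xi>\<in>Gmap m df \<alpha> (t, u, v). norm \<xi> \<le> c * (1 + norm (u, v)))"
  proof (intro allI impI ballI)
    fix t u v \<xi> assume t: "t \<ge> t0" and xi: "\<xi> \<in> Gmap m df \<alpha> (t, u, v)"
    then obtain g where g: "g \<in> Cset m df u" "\<xi> = (v, - ((\<alpha> / t) *\<^sub>R v) - g)"
      unfolding G_eq using argmin_props(4)[OF Cset_props[OF m]] by blast
    define R where "R = M0 + \<bar>L\<bar> * norm u"
    have pts: "df i u \<in> cball 0 R" if i: "i \<in> {1..m}" for i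
    proof -
      have "norm (df i u) \<le> norm (df i 0) + norm (df i u - df i 0)"
        by (metis add.commute diff_add_cancel norm_triangle_ineq)
      also have "\<dots> \<le> M0 + L * norm (u - 0)"
      proof (intro add_mono)
        show "norm (df i 0) \<le> M0" using i unfolding M0_def by (intro member_le_sum) auto
        show "norm (df i u - df i 0) \<le> L * norm (u - 0)" using lip i by blast
      qed
      also have "\<dots> \<le> R" unfolding R_def
        by (simp add: mult_right_mono)
      finally show ?thesis by simp
    qed
    have "Cset m df u \<subseteq> cball 0 R" unfolding Cset_def
      by (rule hull_minimal) (use pts in \<open>auto simp: convex_cball\<close>)
    then have ng: "norm g \<le> R" using g by auto
    have nu: "norm u \<le> norm (u, v)" by (rule norm_fst_le)
    have nv: "norm v \<le> norm (u, v)" by (rule norm_snd_le)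
    have at: "\<alpha> / t \<le> \<alpha> / t0" using t t0 al by (simp add: frac_le)
    have at0: "\<alpha> / t \<ge> 0" using t t0 al by simp
    have "norm \<xi> \<le> norm v + norm (- ((\<alpha> / t) *\<^sub>R v) - g)" unfolding g by (rule norm_Pair_le)
    also have "\<dots> \<le> norm v + ((\<alpha> / t) * norm v + norm g)"
      by (intro add_left_mono order.trans[OF norm_triangle_ineq4]) (use t t0 al in simp)
    also have "\<dots> \<le> norm v + ((\<alpha> / t0) * norm v + R)"
      by (intro add_left_mono add_mono mult_right_mono at ng) auto
    also have "\<dots> = (1 + \<alpha> / t0) * norm v + \<bar>L\<bar> * norm u + M0" unfolding R_def by (simp add: algebra_simps)
    also have "\<dots> \<le> (1 + \<alpha> / t0) * norm (u, v) + \<bar>L\<bar> * norm (u, v) + M0"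
      using apos by (intro add_mono mult_left_mono nu nv) auto
    also have "\<dots> = (1 + \<alpha> / t0 + \<bar>L\<bar>) * norm (u, v) + M0" by (simp add: algebra_simps)
    also have "\<dots> \<le> c * norm (u, v) + c"
    proof (rule add_mono)
      show "(1 + \<alpha> / t0 + \<bar>L\<bar>) * norm (u, v) \<le> c * norm (u, v)"
        unfolding c_def using M0 by (intro mult_right_mono) auto
      show "M0 \<le> c" unfolding c_def using apos by simp
    qed
    finally show "norm \<xi> \<le> c * (1 + norm (u, v))" by (simp add: algebra_simps)
  qed
  then show ?thesis using cpos by blast
qed



lemma GS_orth:
  fixes U :: "'a::real_inner set"
  assumes "finite U" "pairwise orthogonal U" "0 \<notin> U" "y \<in> U"
  shows "inner (a - (\<Sum>b\<in>U. (inner b a / inner b b) *\<^sub>R b)) y = 0"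
proof -
  have "(\<Sum>b\<in>U. (inner b a / inner b b) * inner b y) = (\<Sum>b\<in>U. if b = y then inner y a else 0)"
  proof (rule sum.cong[OF refl])
    fix b assume b: "b \<in> U"
    show "(inner b a / inner b b) * inner b y = (if b = y then inner y a else 0)"
    proof (cases "b = y")
      case True
      then have "inner y y \<noteq> 0" using assms by auto
      then show ?thesis using True by simp
    next
      case False
      then have "inner b y = 0" using assms b unfolding pairwise_def orthogonal_def by blast
      then show ?thesis using False by simp
    qed
  qed
  also have "\<dots> = inner y a" using assms by simp
  finally have e: "(\<Sum>b\<in>U. (inner b a / inner b b) * inner b y) = inner y a" .
  have "inner (a - (\<Sum>b\<in>U. (inner b a / inner b b) *\<^sub>R b)) y
      = inner a y - (\<Sum>b\<in>U. (inner b a / inner b b) * inner b y)"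
    by (simp add: inner_diff_left inner_sum_left)
  then show ?thesis using e by (simp add: inner_commute)
qed

lemma GS_exists:
  fixes T :: "'a::real_inner set"
  assumes "finite T"
  shows "\<exists>U. finite U \<and> pairwise orthogonal U \<and> 0 \<notin> U \<and> span U = span T"
  using assms
proof (induction T rule: finite_induct)
  case empty
  then show ?case by (intro exI[of _ "{}"]) auto
next
  case (insert a T)
  then obtain U where U: "finite U" "pairwise orthogonal U" "0 \<notin> U" "span U = span T" by blast
  define a' where "a' = a - (\<Sum>b\<in>U. (inner b a / inner b b) *\<^sub>R b)"
  have sp: "span (insert a T) = span (insert a U)" using U(4) by (simp add: span_insert)
  have diff: "a - a' \<in> span U" unfolding a'_def by (simp add: span_sum span_mul span_base)
  show ?case
  proof (cases "a' = 0")
    case True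
    then have "a \<in> span U" using diff by simp
    then show ?thesis using U sp span_redundant by metis
  next
    case False
    have orth: "orthogonal a' y" if "y \<in> U" for y
      using GS_orth[OF U(1-3) that] unfolding a'_def orthogonal_def by simp
    have "span (insert a' U) = span (insert a U)"
      using eq_span_insert_eq[of a' a U] diff span_neg[of "a - a'" U] by simp
    then show ?thesis using U False sp orth
      by (intro exI[of _ "insert a' U"]) (auto intro: pairwise_orthogonal_insert)
  qed
qed

lemma GS_repr:
  fixes U :: "'a::real_inner set"
  assumes "finite U" "pairwise orthogonal U" "0 \<notin> U" "x \<in> span U"
  shows "x = (\<Sum>b\<in>U. (inner b x / inner b b) *\<^sub>R b)"
proof -
  define r where "r = x - (\<Sum>b\<in>U. (inner b x / inner b b) *\<^sub>R b)"
  have "orthogonal r y" if "y \<in> U" for y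
    using GS_orth[OF assms(1-3) that] unfolding r_def orthogonal_def by simp
  moreover have "r \<in> span U" unfolding r_def using assms(4)
    by (simp add: span_diff span_sum span_mul span_base)
  ultimately have "orthogonal r r" by (rule orthogonal_to_span[rotated])
  then have "r = 0" by (simp add: orthogonal_def)
  then show ?thesis unfolding r_def by simp
qed

lemma compact_box:
  fixes U :: "'a::real_normed_vector set"
  assumes "finite U"
  shows "compact {\<Sum>b\<in>U. c b *\<^sub>R b | c. \<forall>b\<in>U. \<bar>c b\<bar> \<le> R b}"
  using assms
proof (induction U rule: finite_induct)
  case empty
  then show ?case by simp
next
  case (insert a U)
  let ?S = "{\<Sum>b\<in>U. c b *\<^sub>R b | c. \<forall>b\<in>U. \<bar>c b\<bar> \<le> R b}"
  have eq: "{\<Sum>b\<in>insert a U. c b *\<^sub>R b | c. \<forall>b\<in>insert a U. \<bar>c b\<bar> \<le> R b}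
     = (\<lambda>p. fst p *\<^sub>R a + snd p) ` ({- R a..R a} \<times> ?S)"
  proof (intro equalityI subsetI)
    fix x assume "x \<in> {\<Sum>b\<in>insert a U. c b *\<^sub>R b | c. \<forall>b\<in>insert a U. \<bar>c b\<bar> \<le> R b}"
    then obtain c where c: "x = (\<Sum>b\<in>insert a U. c b *\<^sub>R b)" "\<forall>b\<in>insert a U. \<bar>c b\<bar> \<le> R b" by blast
    then have "x = (\<lambda>p. fst p *\<^sub>R a + snd p) (c a, \<Sum>b\<in>U. c b *\<^sub>R b)"
      using insert by simp
    moreover have "(\<Sum>b\<in>U. c b *\<^sub>R b) \<in> ?S"
      unfolding mem_Collect_eq by (rule exI[where x=c]) (use c(2) in simp)
    moreover have "c a \<in> {- R a..R a}" using c(2) by (simp add: abs_le_iff)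
    ultimately show "x \<in> (\<lambda>p. fst p *\<^sub>R a + snd p) ` ({- R a..R a} \<times> ?S)"
      by (intro image_eqI[where x="(c a, \<Sum>b\<in>U. c b *\<^sub>R b)"] SigmaI) auto
  next
    fix x assume "x \<in> (\<lambda>p. fst p *\<^sub>R a + snd p) ` ({- R a..R a} \<times> ?S)"
    then obtain s y where sy: "x = s *\<^sub>R a + y" "s \<in> {- R a..R a}" "y \<in> ?S"
      by force
    then obtain c where "y = (\<Sum>b\<in>U. c b *\<^sub>R b)" "\<forall>b\<in>U. \<bar>c b\<bar> \<le> R b" by blast
    then have sc: "x = s *\<^sub>R a + (\<Sum>b\<in>U. c b *\<^sub>R b)" "s \<in> {- R a..R a}" "\<forall>b\<in>U. \<bar>c b\<bar> \<le> R b"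
      using sy by auto
    define c' where "c' = c(a := s)"
    have "(\<Sum>b\<in>U. c' b *\<^sub>R b) = (\<Sum>b\<in>U. c b *\<^sub>R b)"
      using insert by (intro sum.cong) (auto simp: c'_def)
    then have "x = (\<Sum>b\<in>insert a U. c' b *\<^sub>R b)" using insert sc by (simp add: c'_def)
    moreover have "\<forall>b\<in>insert a U. \<bar>c' b\<bar> \<le> R b" using sc by (auto simp: c'_def abs_le_iff)
    ultimately show "x \<in> {\<Sum>b\<in>insert a U. c b *\<^sub>R b | c. \<forall>b\<in>insert a U. \<bar>c b\<bar> \<le> R b}"
      unfolding mem_Collect_eq by (intro exI[where x=c'] conjI)
  qed
  show ?case unfolding eq
    by (intro compact_continuous_image compact_Times compact_Icc insert continuous_intros)
qed

lemma fin_dim_compact_ball: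
  fixes B :: "'a::real_inner set"
  assumes "finite B" "span B = UNIV"
  shows "\<exists>K. compact K \<and> cball (0::'a) r \<subseteq> K"
proof -
  obtain U :: "'a set" where U0: "finite U" "pairwise orthogonal U" "0 \<notin> U" "span U = span B"
    using GS_exists[OF assms(1)] by blast
  have U: "finite U" "pairwise orthogonal U" "0 \<notin> U" "span U = UNIV" using U0 assms(2) by simp_all
  let ?K = "{\<Sum>b\<in>U. c b *\<^sub>R b | c. \<forall>b\<in>U. \<bar>c b\<bar> \<le> r / norm b}"
  have "cball 0 r \<subseteq> ?K"
  proof
    fix x :: 'a assume "x \<in> cball 0 r"
    then have xr: "norm x \<le> r" by simp
    have bd: "\<forall>b\<in>U. \<bar>inner b x / inner b b\<bar> \<le> r / norm b"
    proof
      fix b assume "b \<in> U"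
      then have nb: "norm b > 0" using U(3) by auto
      have "\<bar>inner b x / inner b b\<bar> = \<bar>inner b x\<bar> / (norm b * norm b)"
      proof -
        have "inner b b = norm b * norm b" by (simp add: dot_square_norm power2_eq_square)
        then show ?thesis by (simp add: abs_divide)
      qed
      also have "\<dots> \<le> (norm b * r) / (norm b * norm b)"
      proof (rule divide_right_mono)
        have "\<bar>inner b x\<bar> \<le> norm b * norm x" by (rule Cauchy_Schwarz_ineq2)
        also have "\<dots> \<le> norm b * r" using xr by (simp add: mult_left_mono)
        finally show "\<bar>inner b x\<bar> \<le> norm b * r" .
      qed simp
      also have "\<dots> = r / norm b" using nb by simp
      finally show "\<bar>inner b x / inner b b\<bar> \<le> r / norm b" .
    qed
    have "x \<in> span U" using U(4) by simp
    then have rx: "x = (\<Sum>b\<in>U. (inner b x / inner b b) *\<^sub>R b)" by (rule GS_repr[OF U(1-3)])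
    show "x \<in> ?K"
      unfolding mem_Collect_eq by (rule exI[where x="\<lambda>b. inner b x / inner b b"], rule conjI[OF rx bd])
  qed
  note cb = this
  show ?thesis
  proof (intro exI[of _ ?K] conjI)
    show "compact ?K" by (rule compact_box[OF U(1)])
  qed (rule cb)
qed



lemma basic_tendsto:
  fixes m :: nat and df :: "nat \<Rightarrow> 'a::real_inner \<Rightarrow> 'a" and s0 :: real and u0 v0 :: 'a
  assumes cont: "\<forall>i\<in>{1..m}. continuous_on UNIV (df i)"
  shows "((\<lambda>x. fst x) \<longlongrightarrow> s0) (nhds (s0, u0, v0))"
    "((\<lambda>x. fst (snd x)) \<longlongrightarrow> u0) (nhds (s0, u0, v0))"
    "((\<lambda>x. snd (snd x)) \<longlongrightarrow> v0) (nhds (s0, u0, v0))"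
    "\<And>i. i \<in> {1..m} \<Longrightarrow> ((\<lambda>x. df i (fst (snd x))) \<longlongrightarrow> df i u0) (nhds (s0, u0, v0))"
proof -
  have id: "((\<lambda>x. x) \<longlongrightarrow> (s0, u0, v0)) (nhds (s0, u0, v0))" by (rule filterlim_ident)
  show T: "((\<lambda>x. fst x) \<longlongrightarrow> s0) (nhds (s0, u0, v0))"
    using tendsto_fst[OF id] by simp
  show U: "((\<lambda>x. fst (snd x)) \<longlongrightarrow> u0) (nhds (s0, u0, v0))"
    using tendsto_fst[OF tendsto_snd[OF id]] by simp
  show "((\<lambda>x. snd (snd x)) \<longlongrightarrow> v0) (nhds (s0, u0, v0))"
    using tendsto_snd[OF tendsto_snd[OF id]] by simp
  fix i assume i: "i \<in> {1..m}"
  have "isCont (df i) u0" using cont i continuous_on_eq_continuous_at[of UNIV] by blast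
  then show "((\<lambda>x. df i (fst (snd x))) \<longlongrightarrow> df i u0) (nhds (s0, u0, v0))"
    by (rule isCont_tendsto_compose[OF _ U])
qed

lemma usc_part:
  fixes df :: "nat \<Rightarrow> 'a::real_inner \<Rightarrow> 'a"
  assumes m: "m \<ge> 1" and cont: "\<And>i. i \<in> {1..m} \<Longrightarrow> continuous_on UNIV (df i)" and t0: "t0 > 0"
  shows "usc_on ({t0..} \<times> UNIV \<times> UNIV) (Gmap m df \<alpha>)"
  unfolding usc_on_def
proof (intro ballI allI impI)
  fix x0 N assume x0S: "x0 \<in> {t0..} \<times> (UNIV::'a set) \<times> (UNIV::'a set)" and N: "open N \<and> Gmap m df \<alpha> x0 \<subseteq> N"
  obtain s0 u0 v0 where x0: "x0 = (s0, u0, v0)" by (cases x0) auto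
  have s0: "s0 \<ge> t0" using x0S x0 by auto
  define I where "I = {1..m}"
  have finI: "finite I" unfolding I_def by simp
  let ?G0 = "Gmap m df \<alpha> (s0, u0, v0)"
  obtain \<epsilon> where \<epsilon>: "\<epsilon> > 0" "\<And>\<xi>. \<xi> \<in> ?G0 \<Longrightarrow> \<exists>G\<in>{N}. ball \<xi> \<epsilon> \<subseteq> G"
  proof -
    have c: "compact ?G0" by (rule G_props(1)[OF m])
    have "?G0 \<subseteq> \<Union>{N}" using N x0 by auto
    from Heine_Borel_lemma[OF c this] N show ?thesis using that by blast
  qed
  define val where "val x i = inner (df i (fst (snd x))) (- snd (snd x))" for x :: "real \<times> 'a \<times> 'a" and i
  define h where "h x = (snd (snd x), - ((\<alpha> / fst x) *\<^sub>R snd (snd x)))" for x :: "real \<times> 'a \<times> 'a"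
  have contb: "\<forall>i\<in>{1..m}. continuous_on UNIV (df i)" using cont by blast
  note BT = basic_tendsto[where ?s0.0=s0 and ?u0.0=u0 and ?v0.0=v0, OF contb]
  have E1: "eventually (\<lambda>x. \<forall>i\<in>I. \<forall>j\<in>I. val x0 i > val x0 j \<longrightarrow> val x i > val x j) (nhds x0)"
  proof (intro eventually_ball_finite finI ballI)
    fix i j assume i: "i \<in> I" and j: "j \<in> I"
    show "eventually (\<lambda>x. val x0 i > val x0 j \<longrightarrow> val x i > val x j) (nhds x0)"
    proof (cases "val x0 i > val x0 j")
      case True
      have "((\<lambda>x. val x i - val x j) \<longlongrightarrow> val x0 i - val x0 j) (nhds x0)"
        unfolding val_def x0
        by (intro tendsto_diff tendsto_inner tendsto_minus) (use i j BT in \<open>auto simp: I_def\<close>)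
      then have "eventually (\<lambda>x. 0 < val x i - val x j) (nhds x0)"
        by (rule order_tendstoD(1)) (use True in simp)
      then show ?thesis by eventually_elim simp
    qed simp
  qed
  have E2: "eventually (\<lambda>x. \<forall>i\<in>I. dist (df i (fst (snd x))) (df i u0) < \<epsilon> / 2) (nhds x0)"
  proof (intro eventually_ball_finite finI ballI)
    fix i assume "i \<in> I"
    then show "eventually (\<lambda>x. dist (df i (fst (snd x))) (df i u0) < \<epsilon> / 2) (nhds x0)"
      unfolding x0 using \<epsilon>(1) by (intro tendstoD BT(4)) (auto simp: I_def)
  qed
  have E3: "eventually (\<lambda>x. dist (h x) (h x0) < \<epsilon> / 2) (nhds x0)"
  proof -
    have "s0 \<noteq> 0" using s0 t0 by simp
    then have "(h \<longlongrightarrow> h x0) (nhds x0)" unfolding h_def x0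
      by (intro tendsto_Pair tendsto_minus tendsto_scaleR tendsto_divide tendsto_const) (use BT in auto)
    then show ?thesis using \<epsilon>(1) by (intro tendstoD) auto
  qed
  have "eventually (\<lambda>x. (\<forall>i\<in>I. \<forall>j\<in>I. val x0 i > val x0 j \<longrightarrow> val x i > val x j) \<and>
     (\<forall>i\<in>I. dist (df i (fst (snd x))) (df i u0) < \<epsilon> / 2) \<and> dist (h x) (h x0) < \<epsilon> / 2) (nhds x0)"
    by (rule eventually_conj[OF E1 eventually_conj[OF E2 E3]])
  then obtain M where M: "open M" "x0 \<in> M" "\<And>x. x \<in> M \<Longrightarrow> (\<forall>i\<in>I. \<forall>j\<in>I. val x0 i > val x0 j \<longrightarrow> val x i > val x j) \<and>
     (\<forall>i\<in>I. dist (df i (fst (snd x))) (df i u0) < \<epsilon> / 2) \<and> dist (h x) (h x0) < \<epsilon> / 2"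
    unfolding eventually_nhds by blast
  show "\<exists>M. open M \<and> x0 \<in> M \<and> (\<forall>y\<in>M \<inter> {t0..} \<times> UNIV \<times> UNIV. Gmap m df \<alpha> y \<subseteq> N)"
  proof (intro exI[of _ M] conjI M(1,2) ballI subsetI)
    fix y \<xi> assume yM: "y \<in> M \<inter> {t0..} \<times> UNIV \<times> UNIV" and xi: "\<xi> \<in> Gmap m df \<alpha> y"
    obtain t u v where y: "y = (t, u, v)" by (cases y) auto
    have My: "(\<forall>i\<in>I. \<forall>j\<in>I. val x0 i > val x0 j \<longrightarrow> val y i > val y j) \<and>
     (\<forall>i\<in>I. dist (df i (fst (snd y))) (df i u0) < \<epsilon> / 2) \<and> dist (h y) (h x0) < \<epsilon> / 2"
      using M(3) yM by blast
    then have P1: "\<forall>i\<in>I. \<forall>j\<in>I. val x0 i > val x0 j \<longrightarrow> val y i > val y j"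
      and P2: "\<forall>i\<in>I. dist (df i u) (df i u0) < \<epsilon> / 2" and P3: "dist (h y) (h x0) < \<epsilon> / 2"
      unfolding y fst_conv snd_conv by blast+
    from xi have "\<xi> \<in> (\<lambda>g. (v, - ((\<alpha> / t) *\<^sub>R v) - g)) ` argmin_inner (Cset m df u) (- v)"
      unfolding y G_eq .
    then obtain g where g: "g \<in> argmin_inner (Cset m df u) (- v)" "\<xi> = (v, - ((\<alpha> / t) *\<^sub>R v) - g)"
      by blast
    have gC: "g \<in> convex hull ((\<lambda>i. df i u) ` I)"
      using g(1) unfolding argmin_inner_def Cset_def I_def by blast
    have gmin: "\<forall>g'\<in>Cset m df u. inner g (-v) \<le> inner g' (-v)"
      using g(1) unfolding argmin_inner_def by blast
    obtain l where l: "\<forall>i\<in>I. 0 \<le> l i" "sum l I = 1" "g = (\<Sum>i\<in>I. l i *\<^sub>R df i u)"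
      using gC unfolding hull_idx[OF finI] by blast
    have valy: "val y i = inner (df i u) (- v)" for i unfolding val_def y by simp
    have val0: "val x0 i = inner (df i u0) (- v0)" for i unfolding val_def x0 by simp
    have ge: "inner g (-v) \<le> val y i" if "i \<in> I" for i
    proof -
      have "df i u \<in> Cset m df u" using that unfolding Cset_def I_def by (intro hull_inc) auto
      then show ?thesis using gmin unfolding valy by blast
    qed
    have act: "val x0 i \<le> val x0 j" if "i \<in> I" "j \<in> I" "l i > 0" for i j
    proof (rule ccontr)
      assume "\<not> val x0 i \<le> val x0 j"
      then have "val y i > val y j" using P1 that by auto
      then have gt: "val y i > inner g (-v)" using ge[OF that(2)] by simp
      have "0 < (\<Sum>k\<in>I. l k * (val y k - inner g (-v)))"
      proof (rule sum_pos2[OF finI that(1)])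
        show "0 < l i * (val y i - inner g (-v))" using that(3) gt by simp
        fix k assume k: "k \<in> I"
        have "0 \<le> val y k - inner g (-v)" using ge[OF k] by simp
        then show "0 \<le> l k * (val y k - inner g (-v))"
          using l(1) k by (intro mult_nonneg_nonneg) auto
      qed
      also have "\<dots> = (\<Sum>k\<in>I. l k * val y k) - inner g (-v)"
      proof -
        have "(\<Sum>k\<in>I. l k * (val y k - inner g (-v))) = (\<Sum>k\<in>I. l k * val y k) - (\<Sum>k\<in>I. l k) * inner g (-v)"
          by (simp only: right_diff_distrib sum_subtractf sum_distrib_right)
        then show ?thesis using l(2) by simp
      qed
      also have "(\<Sum>k\<in>I. l k * val y k) = inner g (-v)"
        unfolding l(3) valy by (simp add: inner_sum_left sum_negf)
      finally show False by simp
    qed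
    define g' where "g' = (\<Sum>i\<in>I. l i *\<^sub>R df i u0)"
    have g'C: "g' \<in> Cset m df u0" unfolding Cset_def g'_def I_def[symmetric]
      using hull_idx[OF finI] l by blast
    have g'min: "inner g' (-v0) \<le> inner g'' (-v0)" if "g'' \<in> Cset m df u0" for g''
    proof -
      have "inner g' (-v0) = (\<Sum>i\<in>I. l i * val x0 i)" unfolding g'_def val0 by (simp add: inner_sum_left sum_negf)
      also have "\<dots> \<le> (\<Sum>i\<in>I. l i * inner g'' (-v0))"
      proof (rule sum_mono)
        fix i assume i: "i \<in> I"
        show "l i * val x0 i \<le> l i * inner g'' (- v0)"
        proof (cases "l i > 0")
          case True
          have "val x0 i \<le> inner g'' (-v0)"
          proof (rule hull_le[of g'' "\<lambda>j. df j u0" I])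
            show "g'' \<in> convex hull (\<lambda>j. df j u0) ` I" using that unfolding Cset_def I_def .
            fix j assume "j \<in> I"
            from act[OF i this True] show "val x0 i \<le> inner (df j u0) (- v0)" unfolding val0 .
          qed
          then show ?thesis using True by (rule mult_left_mono[OF _ less_imp_le])
        next
          case False
          then have "l i = 0" using l(1) i by force
          then show ?thesis by simp
        qed
      qed
      also have "\<dots> = (\<Sum>i\<in>I. l i) * inner g'' (-v0)" by (simp only: sum_distrib_right)
      also have "\<dots> = inner g'' (-v0)" using l(2) by simp
      finally show ?thesis .
    qed
    define \<xi>0 where "\<xi>0 = (v0, - ((\<alpha> / s0) *\<^sub>R v0) - g')"
    have \<xi>0G: "\<xi>0 \<in> ?G0" unfolding G_eq \<xi>0_def argmin_inner_def using g'C g'min by auto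
    have ngg: "norm (g - g') \<le> \<epsilon> / 2"
    proof -
      have "g - g' = (\<Sum>i\<in>I. l i *\<^sub>R (df i u - df i u0))"
        unfolding l(3) g'_def by (simp add: scaleR_diff_right sum_subtractf)
      then have "norm (g - g') \<le> (\<Sum>i\<in>I. norm (l i *\<^sub>R (df i u - df i u0)))"
        by (simp only:) (rule norm_sum)
      also have "\<dots> \<le> (\<Sum>i\<in>I. l i * (\<epsilon> / 2))"
      proof (rule sum_mono)
        fix i assume i: "i \<in> I"
        have "norm (df i u - df i u0) \<le> \<epsilon> / 2" using P2 i unfolding dist_norm by (meson less_imp_le)
        moreover have li: "0 \<le> l i" using l(1) i by blast
        ultimately have "l i * norm (df i u - df i u0) \<le> l i * (\<epsilon> / 2)" by (rule mult_left_mono)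
        then show "norm (l i *\<^sub>R (df i u - df i u0)) \<le> l i * (\<epsilon> / 2)"
          using li by simp
      qed
      also have "\<dots> = (\<Sum>i\<in>I. l i) * (\<epsilon> / 2)" by (simp only: sum_distrib_right)
      also have "\<dots> = \<epsilon> / 2" using l(2) by simp
      finally show ?thesis .
    qed
    have "\<xi> - \<xi>0 = (h y - h x0) - (0, g - g')"
      unfolding g(2) \<xi>0_def h_def y x0 by simp
    have "dist \<xi>0 \<xi> = norm (\<xi> - \<xi>0)" by (simp add: dist_norm norm_minus_commute)
    also have "\<dots> = norm ((h y - h x0) - ((0::'a), g - g'))" using \<open>\<xi> - \<xi>0 = _\<close> by simp
    also have "\<dots> \<le> norm (h y - h x0) + norm ((0::'a), g - g')" by (rule norm_triangle_ineq4)
    also have "\<dots> = dist (h y) (h x0) + norm (g - g')" by (simp add: dist_norm norm_Pair)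
    also have "\<dots> < \<epsilon>" using P3 ngg by simp
    finally have "\<xi> \<in> ball \<xi>0 \<epsilon>" by simp
    then show "\<xi> \<in> N" using \<epsilon>(2)[OF \<xi>0G] by auto
  qed
qed



lemma proj_in:
  fixes K :: "'a::real_normed_vector set"
  assumes "compact K" "K \<noteq> {}"
  shows "proj K y \<in> K"
proof -
  have "continuous_on K (\<lambda>w. (norm (w - y))\<^sup>2)" by (intro continuous_intros)
  then obtain w where "w \<in> K" "\<forall>w'\<in>K. (norm (w - y))\<^sup>2 \<le> (norm (w' - y))\<^sup>2"
    using continuous_attains_inf[OF assms] by blast
  then have "\<exists>w. w \<in> K \<and> (\<forall>w'\<in>K. (norm (w - y))\<^sup>2 \<le> (norm (w' - y))\<^sup>2)" by blast
  from someI_ex[OF this] show ?thesis unfolding proj_def by blast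
qed

lemma lc_part:
  fixes df :: "nat \<Rightarrow> 'a::real_inner \<Rightarrow> 'a" and B :: "'a set"
  assumes m: "m \<ge> 1" and cont: "\<And>i. i \<in> {1..m} \<Longrightarrow> continuous_on UNIV (df i)" and t0: "t0 > 0"
    and al: "\<alpha> > 0" and B: "finite B" "span B = UNIV"
  shows "locally_compact_map ({t0..} \<times> UNIV \<times> UNIV) (\<lambda>x. proj (Gmap m df \<alpha> x) 0)"
  unfolding locally_compact_map_def
proof (intro ballI)
  fix x0 assume x0S: "x0 \<in> {t0..} \<times> (UNIV::'a set) \<times> (UNIV::'a set)"
  obtain s0 u0 v0 where x0: "x0 = (s0, u0, v0)" by (cases x0) auto
  define I where "I = {1..m}"
  have finI: "finite I" unfolding I_def by simp
  have contb: "\<forall>i\<in>{1..m}. continuous_on UNIV (df i)" using cont by blast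
  note BT = basic_tendsto[where ?s0.0=s0 and ?u0.0=u0 and ?v0.0=v0, OF contb]
  have E2: "eventually (\<lambda>x. \<forall>i\<in>I. dist (df i (fst (snd x))) (df i u0) < 1) (nhds x0)"
  proof (intro eventually_ball_finite finI ballI)
    fix i assume "i \<in> I"
    then show "eventually (\<lambda>x. dist (df i (fst (snd x))) (df i u0) < 1) (nhds x0)"
      unfolding x0 by (intro tendstoD BT(4)) (auto simp: I_def)
  qed
  have E3: "eventually (\<lambda>x. dist (snd (snd x)) v0 < 1) (nhds x0)"
    unfolding x0 by (intro tendstoD BT(3)) auto
  obtain M where M: "open M" "x0 \<in> M" "\<And>x. x \<in> M \<Longrightarrow> (\<forall>i\<in>I. dist (df i (fst (snd x))) (df i u0) < 1) \<and> dist (snd (snd x)) v0 < 1"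
    using eventually_conj[OF E2 E3] unfolding eventually_nhds by blast
  define r1 where "r1 = norm v0 + 1"
  define r2 where "r2 = (\<Sum>i\<in>I. norm (df i u0)) + 1"
  define r where "r = r1 + (\<alpha> / t0) * r1 + r2"
  obtain K :: "'a set" where K: "compact K" "cball 0 r \<subseteq> K"
    using fin_dim_compact_ball[OF B, of r] by blast
  show "\<exists>M K. open M \<and> x0 \<in> M \<and> compact K \<and> (\<lambda>x. proj (Gmap m df \<alpha> x) 0) ` (M \<inter> {t0..} \<times> UNIV \<times> UNIV) \<subseteq> K"
  proof (intro exI[of _ M] exI[of _ "K \<times> K"] conjI M(1,2) compact_Times K(1) subsetI)
    fix p assume "p \<in> (\<lambda>x. proj (Gmap m df \<alpha> x) 0) ` (M \<inter> {t0..} \<times> UNIV \<times> UNIV)"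
    then obtain y where yM: "y \<in> M \<inter> {t0..} \<times> UNIV \<times> UNIV" and p: "p = proj (Gmap m df \<alpha> y) 0" by blast
    obtain t u v where y: "y = (t, u, v)" by (cases y) auto
    have tt: "t \<ge> t0" using yM y by auto
    have My: "(\<forall>i\<in>I. dist (df i (fst (snd y))) (df i u0) < 1) \<and> dist (snd (snd y)) v0 < 1"
      using M(3) yM by blast
    then have P2: "\<forall>i\<in>I. dist (df i u) (df i u0) < 1" and P3: "dist v v0 < 1"
      unfolding y fst_conv snd_conv by blast+
    have "p \<in> Gmap m df \<alpha> (t, u, v)" unfolding p y by (intro proj_in G_props[OF m])
    then have "p \<in> (\<lambda>g. (v, - ((\<alpha> / t) *\<^sub>R v) - g)) ` argmin_inner (Cset m df u) (- v)"
      unfolding G_eq .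
    then obtain g where g: "g \<in> Cset m df u" "p = (v, - ((\<alpha> / t) *\<^sub>R v) - g)"
      using argmin_props(4)[OF Cset_props[OF m]] by blast
    have pts: "df i u \<in> cball 0 r2" if i: "i \<in> I" for i
    proof -
      have "norm (df i u) \<le> norm (df i u0) + norm (df i u - df i u0)"
        by (metis add.commute diff_add_cancel norm_triangle_ineq)
      also have "\<dots> \<le> (\<Sum>i\<in>I. norm (df i u0)) + 1"
      proof (rule add_mono)
        show "norm (df i u0) \<le> (\<Sum>i\<in>I. norm (df i u0))" using i finI by (intro member_le_sum) auto
        show "norm (df i u - df i u0) \<le> 1" using P2 i unfolding dist_norm by (meson less_imp_le)
      qed
      finally show ?thesis unfolding r2_def by simp
    qed
    have "Cset m df u \<subseteq> cball 0 r2" unfolding Cset_def I_def[symmetric]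
      by (rule hull_minimal) (use pts in \<open>auto simp: convex_cball\<close>)
    then have ng: "norm g \<le> r2" using g by auto
    have nv: "norm v \<le> r1" unfolding r1_def using P3 norm_triangle_ineq2[of v v0]
      unfolding dist_norm by linarith
    have r1pos: "r1 \<ge> 0" unfolding r1_def by simp
    have r2pos: "r2 \<ge> 0" unfolding r2_def by (simp add: sum_nonneg add_nonneg_nonneg)
    have apos: "\<alpha> / t0 > 0" using al t0 by simp
    have at: "\<alpha> / t \<le> \<alpha> / t0" using tt t0 al by (simp add: frac_le)
    have at0: "\<alpha> / t \<ge> 0" using tt t0 al by simp
    have "norm v \<le> r" unfolding r_def using nv apos r1pos r2pos
      by (smt (verit) mult_nonneg_nonneg)
    moreover have "norm (- ((\<alpha> / t) *\<^sub>R v) - g) \<le> r"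
    proof -
      have "norm (- ((\<alpha> / t) *\<^sub>R v) - g) \<le> norm ((\<alpha> / t) *\<^sub>R v) + norm g"
        by (rule order.trans[OF norm_triangle_ineq4]) simp
      also have "\<dots> = (\<alpha> / t) * norm v + norm g" using tt t0 al by simp
      also have "\<dots> \<le> (\<alpha> / t0) * r1 + r2"
        by (intro add_mono ng mult_mono at nv at0 r1pos norm_ge_zero) (use apos in simp)
      also have "\<dots> \<le> r" unfolding r_def using r1pos by simp
      finally show ?thesis .
    qed
    ultimately show "p \<in> K \<times> K" using K(2) g(2) by auto
  qed
qed

theorem proposition3p1:
  fixes f :: "nat \<Rightarrow> 'a::{real_inner, complete_space} \<Rightarrow> real"
    and df :: "nat \<Rightarrow> 'a \<Rightarrow> 'a"
    and m :: nat and \<alpha> t0 :: real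
  assumes m_pos: "m \<ge> 1"
    and convex: "\<And>i. i \<in> {1..m} \<Longrightarrow> convex_on UNIV (f i)"
    and grad: "\<And>i u. i \<in> {1..m} \<Longrightarrow> (f i has_derivative (\<lambda>h. inner (df i u) h)) (at u)"
    and grad_cont: "\<And>i. i \<in> {1..m} \<Longrightarrow> continuous_on UNIV (df i)"
    and alpha_pos: "\<alpha> > 0" and t0_pos: "t0 > 0"
  shows "(\<forall>t u v. t \<ge> t0 \<longrightarrow> convex (Gmap m df \<alpha> (t, u, v)) \<and> compact (Gmap m df \<alpha> (t, u, v)))
    \<and> usc_on ({t0..} \<times> UNIV \<times> UNIV) (Gmap m df \<alpha>)
    \<and> ((\<exists>B :: 'a set. finite B \<and> span B = UNIV) \<longrightarrow>
         locally_compact_map ({t0..} \<times> UNIV \<times> UNIV) (\<lambda>x. proj (Gmap m df \<alpha> x) 0))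
    \<and> (\<forall>L. (\<forall>i\<in>{1..m}. \<forall>x y. norm (df i x - df i y) \<le> L * norm (x - y)) \<longrightarrow>
         (\<exists>c>0. \<forall>t u v. t \<ge> t0 \<longrightarrow>
            (\<forall>\<xi>\<in>Gmap m df \<alpha> (t, u, v). norm \<xi> \<le> c * (1 + norm (u, v)))))"
proof (intro conjI allI impI)
  fix t u v assume "t \<ge> t0"
  show "convex (Gmap m df \<alpha> (t, u, v))" by (rule G_props(2)[OF m_pos])
  show "compact (Gmap m df \<alpha> (t, u, v))" by (rule G_props(1)[OF m_pos])
next
  show "usc_on ({t0..} \<times> UNIV \<times> UNIV) (Gmap m df \<alpha>)"
    by (rule usc_part[OF m_pos grad_cont t0_pos])
next
  assume "\<exists>B :: 'a set. finite B \<and> span B = UNIV"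
  then obtain B :: "'a set" where "finite B" "span B = UNIV" by blast
  then show "locally_compact_map ({t0..} \<times> UNIV \<times> UNIV) (\<lambda>x. proj (Gmap m df \<alpha> x) 0)"
    by (intro lc_part[OF m_pos grad_cont t0_pos alpha_pos])
next
  fix L assume "\<forall>i\<in>{1..m}. \<forall>x y. norm (df i x - df i y) \<le> L * norm (x - y)"
  then show "\<exists>c>0. \<forall>t u v. t \<ge> t0 \<longrightarrow>
            (\<forall>\<xi>\<in>Gmap m df \<alpha> (t, u, v). norm \<xi> \<le> c * (1 + norm (u, v)))"
    by (rule bound_iv[OF m_pos t0_pos alpha_pos])
qed

end
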